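(* Let $\mathbb{G}$ be an $E$-group. (i) If $\mathbb{G}$ is $2$-acyclic, then for every $g\in\mathbb{G}$ the set $\alpha_g:=\bigcap\{\alpha'\subseteq E: g\in\mathbb{G}[\alpha']\}$ satisfies $g\in\mathbb{G}[\alpha_g]$, so it is the unique $\subseteq$-minimal $\alpha'\subseteq E$ with $g\in\mathbb{G}[\alpha']$. (ii) If $\mathbb{G}$ is $3$-acyclic, then for every $\alpha\subseteq E$ and $g\in\mathbb{G}$, the coset $B=g\mathbb{G}[\alpha]$ and the set $\alpha_B:=\bigcap\{\alpha_h: h\in B\}$ (with $\alpha_h$ as in (i)) satisfy $\mathbb{G}[\alpha_B]\cap B\neq\emptyset$; thus $\alpha_B$ is the unique $\subseteq$-minimal $\alpha'\subseteq E$ with $\mathbb{G}[\alpha']\cap B\neq\emptyset$.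
   Context: Let $E$ be a finite set. An $E$-group is a group $\mathbb{G}$ together with an inclusion $E\subseteq\mathbb{G}$ such that $E$ generates $\mathbb{G}$ and every $e\in E$ satisfies $e\neq1$, $e^2=1$. For $\alpha\subseteq E$, $\mathbb{G}[\alpha]$ is the subgroup generated by $\alpha$. A coset cycle of length $n\ge2$ in $\mathbb{G}$ is a cyclically indexed family $(g_i,\alpha_i)_{i\in\mathbb{Z}_n}$ with $g_i\in\mathbb{G}$, $\alpha_i\subseteq E$, such that for all $i$: $g_{i+1}\in g_i\mathbb{G}[\alpha_i]$ and $g_i\mathbb{G}[\alpha_i\cap\alpha_{i-1}]\cap g_{i+1}\mathbb{G}[\alpha_i\cap\alpha_{i+1}]=\emptyset$. $\mathbb{G}$ is $N$-acyclic ($N\ge2$) if it admits no coset cycle of length $n$ with $2\le n\le N$. *)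

theory Defs
  imports "HOL-Algebra.Generated_Groups" "HOL-Algebra.Coset"
begin

definition E_group :: "('a, 'b) monoid_scheme \<Rightarrow> 'a set \<Rightarrow> bool" where
  "E_group G E \<longleftrightarrow> group G \<and> finite E \<and> E \<subseteq> carrier G \<and> generate G E = carrier G \<and>
     (\<forall>e\<in>E. e \<noteq> \<one>\<^bsub>G\<^esub> \<and> e \<otimes>\<^bsub>G\<^esub> e = \<one>\<^bsub>G\<^esub>)"

definition coset_cycle ::
  "('a, 'b) monoid_scheme \<Rightarrow> 'a set \<Rightarrow> nat \<Rightarrow> (nat \<Rightarrow> 'a) \<Rightarrow> (nat \<Rightarrow> 'a set) \<Rightarrow> bool" where
  "coset_cycle G E n g \<alpha> \<longleftrightarrow> 2 \<le> n \<and>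
     (\<forall>i<n. g i \<in> carrier G \<and> \<alpha> i \<subseteq> E \<and>
        g ((i + 1) mod n) \<in> g i <#\<^bsub>G\<^esub> generate G (\<alpha> i) \<and>
        (g i <#\<^bsub>G\<^esub> generate G (\<alpha> i \<inter> \<alpha> ((i + n - 1) mod n))) \<inter>
        (g ((i + 1) mod n) <#\<^bsub>G\<^esub> generate G (\<alpha> i \<inter> \<alpha> ((i + 1) mod n))) = {})"

definition N_acyclic :: "('a, 'b) monoid_scheme \<Rightarrow> 'a set \<Rightarrow> nat \<Rightarrow> bool" where
  "N_acyclic G E N \<longleftrightarrow> (\<forall>n g \<alpha>. 2 \<le> n \<and> n \<le> N \<longrightarrow> \<not> coset_cycle G E n g \<alpha>)"

definition alpha_of :: "('a, 'b) monoid_scheme \<Rightarrow> 'a set \<Rightarrow> 'a \<Rightarrow> 'a set" where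
  "alpha_of G E h = \<Inter>{\<alpha>'. \<alpha>' \<subseteq> E \<and> h \<in> generate G \<alpha>'}"

end

theory Submission
  imports Defs
begin

lemma lcos_mem: "x \<in> a <#\<^bsub>G\<^esub> H \<longleftrightarrow> (\<exists>h\<in>H. x = a \<otimes>\<^bsub>G\<^esub> h)"
  unfolding l_coset_def by auto

lemma inter_closure:
  assumes "finite S" "S \<noteq> {}" "\<forall>b\<in>S. P b" "\<And>b1 b2. P b1 \<Longrightarrow> P b2 \<Longrightarrow> P (b1 \<inter> b2)"
  shows "P (\<Inter>S)"
  using assms
proof (induction S rule: finite_ne_induct)
  case (singleton x) then show ?case by simp
next
  case (insert x F)
  have "P (\<Inter>F)" using insert by simp
  moreover have "P x" using insert.prems by simp
  ultimately have "P (x \<inter> \<Inter>F)" using insert.prems by blast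
  then show ?case by simp
qed

context group begin

lemma cancel_sub:
  assumes "subgroup H G" "x \<in> carrier G" "h \<in> H" "x \<otimes> h \<in> H"
  shows "x \<in> H"
proof -
  have hc: "h \<in> carrier G" by (rule subgroup.mem_carrier[OF assms(1,3)])
  have eq: "(x \<otimes> h) \<otimes> inv h = x" using hc assms(2) by (simp add: m_assoc)
  have "(x \<otimes> h) \<otimes> inv h \<in> H"
    by (rule subgroup.m_closed[OF assms(1) assms(4) subgroup.m_inv_closed[OF assms(1) assms(3)]])
  then show ?thesis unfolding eq .
qed

lemma two_inter:
  assumes EC: "E \<subseteq> carrier G" and ac: "N_acyclic G E 2"
    and a1: "\<alpha>1 \<subseteq> E" and a2: "\<alpha>2 \<subseteq> E"
    and x1: "x \<in> generate G \<alpha>1" and x2: "x \<in> generate G \<alpha>2"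
  shows "x \<in> generate G (\<alpha>1 \<inter> \<alpha>2)"
proof (rule ccontr)
  assume nx: "x \<notin> generate G (\<alpha>1 \<inter> \<alpha>2)"
  have S1: "subgroup (generate G \<alpha>1) G" using a1 EC generate_is_subgroup by auto
  have S2: "subgroup (generate G \<alpha>2) G" using a2 EC generate_is_subgroup by auto
  have S12: "subgroup (generate G (\<alpha>1 \<inter> \<alpha>2)) G" using a1 EC by (intro generate_is_subgroup) auto
  have xc: "x \<in> carrier G" by (rule subgroup.mem_carrier[OF S1 x1])
  have d: "(\<one> <# generate G (\<alpha>1 \<inter> \<alpha>2)) \<inter> (x <# generate G (\<alpha>1 \<inter> \<alpha>2)) = {}"
  proof (rule ccontr)
    assume "\<not> ?thesis"
    then obtain y where y1: "y \<in> \<one> <# generate G (\<alpha>1 \<inter> \<alpha>2)"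
      and y2: "y \<in> x <# generate G (\<alpha>1 \<inter> \<alpha>2)" by blast
    from y1 obtain h1 where h1: "h1 \<in> generate G (\<alpha>1 \<inter> \<alpha>2)" "y = \<one> \<otimes> h1"
      unfolding lcos_mem by blast
    from y2 obtain h2 where h2: "h2 \<in> generate G (\<alpha>1 \<inter> \<alpha>2)" "y = x \<otimes> h2"
      unfolding lcos_mem by blast
    have "h1 \<in> carrier G" by (rule subgroup.mem_carrier[OF S12 h1(1)])
    then have "x \<otimes> h2 \<in> generate G (\<alpha>1 \<inter> \<alpha>2)" using h1 h2 by simp
    then have "x \<in> generate G (\<alpha>1 \<inter> \<alpha>2)" using cancel_sub[OF S12 xc h2(1)] by simp
    with nx show False by simp
  qed
  have m1: "x \<in> \<one> <# generate G \<alpha>1" unfolding lcos_mem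
    by (rule bexI[of _ x]) (simp_all add: x1 xc)
  have ix: "inv x \<in> generate G \<alpha>2" by (rule subgroup.m_inv_closed[OF S2 x2])
  have m2: "\<one> \<in> x <# generate G \<alpha>2" unfolding lcos_mem
    by (rule bexI[of _ "inv x"]) (simp_all add: ix xc)
  define g where "g = (\<lambda>i::nat. if i = 0 then \<one> else x)"
  define a where "a = (\<lambda>i::nat. if i = 0 then \<alpha>1 else \<alpha>2)"
  have "coset_cycle G E 2 g a"
    unfolding coset_cycle_def
  proof (rule conjI[OF order_refl], intro allI impI)
    fix i :: nat assume "i < 2"
    then consider "i = 0" | "i = 1" by linarith
    then show "g i \<in> carrier G \<and> a i \<subseteq> E \<and>
        g ((i + 1) mod 2) \<in> g i <# generate G (a i) \<and>
        (g i <# generate G (a i \<inter> a ((i + 2 - 1) mod 2))) \<inter>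
        (g ((i + 1) mod 2) <# generate G (a i \<inter> a ((i + 1) mod 2))) = {}"
    proof cases
      case 1
      then have e: "g i = \<one>" "a i = \<alpha>1" "g ((i+1) mod 2) = x" "a ((i+2-1) mod 2) = \<alpha>2"
        "a ((i+1) mod 2) = \<alpha>2" by (simp_all add: g_def a_def)
      show ?thesis unfolding e using one_closed a1 m1 d by (intro conjI)
    next
      case 2
      then have e: "g i = x" "a i = \<alpha>2" "g ((i+1) mod 2) = \<one>" "a ((i+2-1) mod 2) = \<alpha>1"
        "a ((i+1) mod 2) = \<alpha>1" by (simp_all add: g_def a_def)
      have d': "(x <# generate G (\<alpha>2 \<inter> \<alpha>1)) \<inter> (\<one> <# generate G (\<alpha>2 \<inter> \<alpha>1)) = {}"
        using d by (simp only: Int_commute)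
      show ?thesis unfolding e using xc a2 m2 d' by (intro conjI)
    qed
  qed
  moreover have "\<not> coset_cycle G E 2 g a"
    using ac[unfolded N_acyclic_def, rule_format, of 2 g a] by simp
  ultimately show False by simp
qed


lemma gen_sub: "A \<subseteq> E \<Longrightarrow> E \<subseteq> carrier G \<Longrightarrow> subgroup (generate G A) G"
  by (rule generate_is_subgroup) blast

lemma three_inter:
  assumes EC: "E \<subseteq> carrier G" and ac: "N_acyclic G E 3"
    and aE: "\<alpha> \<subseteq> E" and gc: "g \<in> carrier G" and b1: "\<beta>1 \<subseteq> E" and b2: "\<beta>2 \<subseteq> E"
    and h1: "h1 \<in> generate G \<beta>1" and h1B: "h1 \<in> g <# generate G \<alpha>"
    and h2: "h2 \<in> generate G \<beta>2" and h2B: "h2 \<in> g <# generate G \<alpha>"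
  shows "generate G (\<beta>1 \<inter> \<beta>2) \<inter> (g <# generate G \<alpha>) \<noteq> {}"
proof (rule ccontr)
  assume "\<not> ?thesis"
  then have nd: "\<And>y. y \<in> generate G (\<beta>1 \<inter> \<beta>2) \<Longrightarrow> y \<in> g <# generate G \<alpha> \<Longrightarrow> False" by blast
  have ac2: "N_acyclic G E 2" using ac unfolding N_acyclic_def by auto
  have SA: "subgroup (generate G \<alpha>) G" using gen_sub aE EC by blast
  have S1: "subgroup (generate G \<beta>1) G" using gen_sub b1 EC by blast
  have S2: "subgroup (generate G \<beta>2) G" using gen_sub b2 EC by blast
  have S12: "subgroup (generate G (\<beta>1 \<inter> \<beta>2)) G" using gen_sub b1 EC by blast
  have h1c: "h1 \<in> carrier G" by (rule subgroup.mem_carrier[OF S1 h1])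
  have h2c: "h2 \<in> carrier G" by (rule subgroup.mem_carrier[OF S2 h2])
  obtain k1 where k1: "k1 \<in> generate G \<alpha>" "h1 = g \<otimes> k1" using h1B unfolding lcos_mem by blast
  obtain k2 where k2: "k2 \<in> generate G \<alpha>" "h2 = g \<otimes> k2" using h2B unfolding lcos_mem by blast
  have k1c: "k1 \<in> carrier G" by (rule subgroup.mem_carrier[OF SA k1(1)])
  have k2c: "k2 \<in> carrier G" by (rule subgroup.mem_carrier[OF SA k2(1)])
  have inB: "y \<in> g <# generate G \<alpha>" if tt: "y = hh \<otimes> k" "k \<in> generate G \<alpha>"
      "hh \<in> g <# generate G \<alpha>" for y hh k
  proof -
    obtain kk where kk: "kk \<in> generate G \<alpha>" "hh = g \<otimes> kk" using tt(3) unfolding lcos_mem by blast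
    have "kk \<in> carrier G" by (rule subgroup.mem_carrier[OF SA kk(1)])
    moreover have "k \<in> carrier G" by (rule subgroup.mem_carrier[OF SA tt(2)])
    ultimately have "y = g \<otimes> (kk \<otimes> k)" using tt(1) kk(2) gc by (simp add: m_assoc)
    moreover have "kk \<otimes> k \<in> generate G \<alpha>" by (rule subgroup.m_closed[OF SA kk(1) tt(2)])
    ultimately show ?thesis unfolding lcos_mem by blast
  qed
  have m01: "h1 \<in> \<one> <# generate G \<beta>1" unfolding lcos_mem
    by (rule bexI[of _ h1]) (simp_all add: h1 h1c)
  have m12: "h2 \<in> h1 <# generate G \<alpha>" unfolding lcos_mem
  proof (rule bexI[of _ "inv k1 \<otimes> k2"])
    show "inv k1 \<otimes> k2 \<in> generate G \<alpha>"
      by (rule subgroup.m_closed[OF SA subgroup.m_inv_closed[OF SA k1(1)] k2(1)])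
    have c: "k1 \<otimes> (inv k1 \<otimes> k2) = k2"
      using k1c k2c by (simp add: m_assoc[symmetric])
    have "h1 \<otimes> (inv k1 \<otimes> k2) = g \<otimes> (k1 \<otimes> (inv k1 \<otimes> k2))"
      using k1 k1c k2c gc by (simp add: m_assoc)
    also have "\<dots> = h2" using c k2(2) by simp
    finally show "h2 = h1 \<otimes> (inv k1 \<otimes> k2)" by simp
  qed
  have m20: "\<one> \<in> h2 <# generate G \<beta>2" unfolding lcos_mem
    by (rule bexI[of _ "inv h2"]) (simp_all add: h2c subgroup.m_inv_closed[OF S2 h2])
  have d0: "(\<one> <# generate G (\<beta>1 \<inter> \<beta>2)) \<inter> (h1 <# generate G (\<beta>1 \<inter> \<alpha>)) = {}"
  proof (rule ccontr)
    assume "\<not> ?thesis"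
    then obtain y where y1: "y \<in> \<one> <# generate G (\<beta>1 \<inter> \<beta>2)"
      and y2: "y \<in> h1 <# generate G (\<beta>1 \<inter> \<alpha>)" by blast
    from y1 obtain u where u: "u \<in> generate G (\<beta>1 \<inter> \<beta>2)" "y = \<one> \<otimes> u"
      unfolding lcos_mem by blast
    from y2 obtain k where k: "k \<in> generate G (\<beta>1 \<inter> \<alpha>)" "y = h1 \<otimes> k"
      unfolding lcos_mem by blast
    have "u \<in> carrier G" by (rule subgroup.mem_carrier[OF S12 u(1)])
    then have yu: "y \<in> generate G (\<beta>1 \<inter> \<beta>2)" using u by simp
    have "k \<in> generate G \<alpha>" using k(1) mono_generate[of "\<beta>1 \<inter> \<alpha>" \<alpha>] by blast
    then have "y \<in> g <# generate G \<alpha>" using inB k(2) h1B by blast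
    then show False using nd yu by blast
  qed
  have d2: "(h2 <# generate G (\<beta>2 \<inter> \<alpha>)) \<inter> (\<one> <# generate G (\<beta>2 \<inter> \<beta>1)) = {}"
  proof (rule ccontr)
    assume "\<not> ?thesis"
    then obtain y where y1: "y \<in> \<one> <# generate G (\<beta>2 \<inter> \<beta>1)"
      and y2: "y \<in> h2 <# generate G (\<beta>2 \<inter> \<alpha>)" by blast
    from y1 obtain u where u: "u \<in> generate G (\<beta>2 \<inter> \<beta>1)" "y = \<one> \<otimes> u"
      unfolding lcos_mem by blast
    from y2 obtain k where k: "k \<in> generate G (\<beta>2 \<inter> \<alpha>)" "y = h2 \<otimes> k"
      unfolding lcos_mem by blast
    have u': "u \<in> generate G (\<beta>1 \<inter> \<beta>2)" using u(1) by (simp add: Int_commute)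
    have "u \<in> carrier G" by (rule subgroup.mem_carrier[OF S12 u'])
    then have yu: "y \<in> generate G (\<beta>1 \<inter> \<beta>2)" using u u' by simp
    have "k \<in> generate G \<alpha>" using k(1) mono_generate[of "\<beta>2 \<inter> \<alpha>" \<alpha>] by blast
    then have "y \<in> g <# generate G \<alpha>" using inB k(2) h2B by blast
    then show False using nd yu by blast
  qed
  have d1: "(h1 <# generate G (\<alpha> \<inter> \<beta>1)) \<inter> (h2 <# generate G (\<alpha> \<inter> \<beta>2)) = {}"
  proof (rule ccontr)
    assume "\<not> ?thesis"
    then obtain y where y1: "y \<in> h1 <# generate G (\<alpha> \<inter> \<beta>1)"
      and y2: "y \<in> h2 <# generate G (\<alpha> \<inter> \<beta>2)" by blast
    from y1 obtain u where u: "u \<in> generate G (\<alpha> \<inter> \<beta>1)" "y = h1 \<otimes> u"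
      unfolding lcos_mem by blast
    from y2 obtain k where k: "k \<in> generate G (\<alpha> \<inter> \<beta>2)" "y = h2 \<otimes> k"
      unfolding lcos_mem by blast
    have uA: "u \<in> generate G \<alpha>" using u(1) mono_generate[of "\<alpha> \<inter> \<beta>1" \<alpha>] by blast
    have u1: "u \<in> generate G \<beta>1" using u(1) mono_generate[of "\<alpha> \<inter> \<beta>1" \<beta>1] by blast
    have k2': "k \<in> generate G \<beta>2" using k(1) mono_generate[of "\<alpha> \<inter> \<beta>2" \<beta>2] by blast
    have yB: "y \<in> g <# generate G \<alpha>" using inB u(2) uA h1B by blast
    have y1': "y \<in> generate G \<beta>1" unfolding u(2) by (rule subgroup.m_closed[OF S1 h1 u1])
    have y2': "y \<in> generate G \<beta>2" unfolding k(2) by (rule subgroup.m_closed[OF S2 h2 k2'])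
    have "y \<in> generate G (\<beta>1 \<inter> \<beta>2)" by (rule two_inter[OF EC ac2 b1 b2 y1' y2'])
    then show False using nd yB by blast
  qed
  define gg where "gg = (\<lambda>i::nat. if i = 0 then \<one> else if i = 1 then h1 else h2)"
  define a where "a = (\<lambda>i::nat. if i = 0 then \<beta>1 else if i = 1 then \<alpha> else \<beta>2)"
  have "coset_cycle G E 3 gg a"
    unfolding coset_cycle_def
  proof (rule conjI, simp, intro allI impI)
    fix i :: nat assume "i < 3"
    then consider "i = 0" | "i = 1" | "i = 2" by linarith
    then show "gg i \<in> carrier G \<and> a i \<subseteq> E \<and>
        gg ((i + 1) mod 3) \<in> gg i <# generate G (a i) \<and>
        (gg i <# generate G (a i \<inter> a ((i + 3 - 1) mod 3))) \<inter>
        (gg ((i + 1) mod 3) <# generate G (a i \<inter> a ((i + 1) mod 3))) = {}"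
    proof cases
      case 1
      then have e: "gg i = \<one>" "a i = \<beta>1" "gg ((i+1) mod 3) = h1" "a ((i+3-1) mod 3) = \<beta>2"
        "a ((i+1) mod 3) = \<alpha>" by (simp_all add: gg_def a_def)
      show ?thesis unfolding e using one_closed b1 m01 d0 by (intro conjI)
    next
      case 2
      then have e: "gg i = h1" "a i = \<alpha>" "gg ((i+1) mod 3) = h2" "a ((i+3-1) mod 3) = \<beta>1"
        "a ((i+1) mod 3) = \<beta>2" by (simp_all add: gg_def a_def)
      show ?thesis unfolding e using h1c aE m12 d1 by (intro conjI)
    next
      case 3
      then have e: "gg i = h2" "a i = \<beta>2" "gg ((i+1) mod 3) = \<one>" "a ((i+3-1) mod 3) = \<alpha>"
        "a ((i+1) mod 3) = \<beta>1" by (simp_all add: gg_def a_def)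
      show ?thesis unfolding e using h2c b2 m20 d2 by (intro conjI)
    qed
  qed
  moreover have "\<not> coset_cycle G E 3 gg a"
    using ac[unfolded N_acyclic_def, rule_format, of 3 gg a] by simp
  ultimately show False by simp
qed

end

theorem mainTheorem5:
  fixes G :: "('a, 'b) monoid_scheme" and E :: "'a set"
  assumes "E_group G E"
  shows "(N_acyclic G E 2 \<longrightarrow>
            (\<forall>g\<in>carrier G. g \<in> generate G (alpha_of G E g) \<and>
               (\<forall>\<alpha>'. \<alpha>' \<subseteq> E \<and> g \<in> generate G \<alpha>' \<longrightarrow> alpha_of G E g \<subseteq> \<alpha>')))
       \<and> (N_acyclic G E 3 \<longrightarrow>
            (\<forall>\<alpha> g. \<alpha> \<subseteq> E \<and> g \<in> carrier G \<longrightarrow>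
               (let B = g <#\<^bsub>G\<^esub> generate G \<alpha>;
                    \<alpha>B = \<Inter>{alpha_of G E h | h. h \<in> B}
                in generate G \<alpha>B \<inter> B \<noteq> {} \<and>
                   (\<forall>\<alpha>'. \<alpha>' \<subseteq> E \<and> generate G \<alpha>' \<inter> B \<noteq> {} \<longrightarrow> \<alpha>B \<subseteq> \<alpha>'))))"
proof -
  have EG: "group G" "finite E" "E \<subseteq> carrier G" "generate G E = carrier G"
    using assms unfolding E_group_def by auto
  interpret group G by (rule EG(1))
  have lower: "alpha_of G E h \<subseteq> \<alpha>'" if "\<alpha>' \<subseteq> E" "h \<in> generate G \<alpha>'" for h \<alpha>'
    unfolding alpha_of_def using that by blast
  have aE: "alpha_of G E h \<subseteq> E" if "h \<in> carrier G" for h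
    using lower[of E h] that EG(4) by simp
  have P1: "h \<in> generate G (alpha_of G E h)" if ac2: "N_acyclic G E 2" and hc: "h \<in> carrier G" for h
  proof -
    let ?F = "{\<alpha>'. \<alpha>' \<subseteq> E \<and> h \<in> generate G \<alpha>'}"
    have fin: "finite ?F" by (rule finite_subset[of _ "Pow E"]) (auto simp: EG(2))
    have ne: "?F \<noteq> {}" using hc EG(4) by auto
    have "(\<lambda>b. b \<subseteq> E \<and> h \<in> generate G b) (\<Inter>?F)"
    proof (rule inter_closure[OF fin ne])
      show "\<forall>b\<in>?F. b \<subseteq> E \<and> h \<in> generate G b" by blast
      fix b1 b2 assume "b1 \<subseteq> E \<and> h \<in> generate G b1" "b2 \<subseteq> E \<and> h \<in> generate G b2"
      then show "b1 \<inter> b2 \<subseteq> E \<and> h \<in> generate G (b1 \<inter> b2)"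
        using two_inter[OF EG(3) ac2, of b1 b2 h] by blast
    qed
    then show ?thesis unfolding alpha_of_def by blast
  qed
  show ?thesis
  proof (intro conjI impI allI ballI)
    fix h assume "N_acyclic G E 2" "h \<in> carrier G"
    then show "h \<in> generate G (alpha_of G E h)" by (rule P1)
  next
    fix h \<alpha>' assume "\<alpha>' \<subseteq> E \<and> h \<in> generate G \<alpha>'"
    then show "alpha_of G E h \<subseteq> \<alpha>'" using lower by blast
  next
    fix \<alpha> g assume ac3: "N_acyclic G E 3" and ag: "\<alpha> \<subseteq> E \<and> g \<in> carrier G"
    have ac2: "N_acyclic G E 2" using ac3 unfolding N_acyclic_def by auto
    define B where "B = g <#\<^bsub>G\<^esub> generate G \<alpha>"
    define S where "S = {alpha_of G E h | h. h \<in> B}"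
    have SA: "subgroup (generate G \<alpha>) G" using gen_sub ag EG(3) by blast
    have Bc: "B \<subseteq> carrier G"
    proof
      fix y assume "y \<in> B"
      then obtain k where "k \<in> generate G \<alpha>" "y = g \<otimes>\<^bsub>G\<^esub> k" unfolding B_def lcos_mem by blast
      then show "y \<in> carrier G" using subgroup.mem_carrier[OF SA] ag by simp
    qed
    have gB: "g \<in> B" unfolding B_def lcos_mem
      by (rule bexI[of _ "\<one>\<^bsub>G\<^esub>"]) (simp_all add: ag subgroup.one_closed[OF SA])
    have fin: "finite S" by (rule finite_subset[of _ "Pow E"]) (use aE Bc in \<open>auto simp: EG(2) S_def\<close>)
    have ne: "S \<noteq> {}" using gB unfolding S_def by blast
    have PS: "(\<lambda>b. b \<subseteq> E \<and> generate G b \<inter> B \<noteq> {}) (\<Inter>S)"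
    proof (rule inter_closure[OF fin ne])
      show "\<forall>b\<in>S. b \<subseteq> E \<and> generate G b \<inter> B \<noteq> {}"
      proof
        fix b assume "b \<in> S"
        then obtain h where h: "h \<in> B" "b = alpha_of G E h" unfolding S_def by blast
        have "h \<in> generate G b" using P1[OF ac2] h Bc by blast
        then show "b \<subseteq> E \<and> generate G b \<inter> B \<noteq> {}" using h aE Bc by blast
      qed
      fix b1 b2 assume b1: "b1 \<subseteq> E \<and> generate G b1 \<inter> B \<noteq> {}"
        and b2: "b2 \<subseteq> E \<and> generate G b2 \<inter> B \<noteq> {}"
      from b1 obtain h1 where "h1 \<in> generate G b1" "h1 \<in> B" by blast
      moreover from b2 obtain h2 where "h2 \<in> generate G b2" "h2 \<in> B" by blast
      ultimately have "generate G (b1 \<inter> b2) \<inter> B \<noteq> {}"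
        unfolding B_def using three_inter[OF EG(3) ac3, of \<alpha> g b1 b2 h1 h2] ag b1 b2 by blast
      then show "b1 \<inter> b2 \<subseteq> E \<and> generate G (b1 \<inter> b2) \<inter> B \<noteq> {}" using b1 by blast
    qed
    have minim: "\<Inter>S \<subseteq> \<alpha>'" if "\<alpha>' \<subseteq> E \<and> generate G \<alpha>' \<inter> B \<noteq> {}" for \<alpha>'
    proof -
      from that obtain h where h: "h \<in> generate G \<alpha>'" "h \<in> B" by blast
      have "alpha_of G E h \<in> S" unfolding S_def using h by blast
      then have "\<Inter>S \<subseteq> alpha_of G E h" by blast
      also have "\<dots> \<subseteq> \<alpha>'" using lower that h by blast
      finally show ?thesis .
    qed
    show "let B = g <#\<^bsub>G\<^esub> generate G \<alpha>; \<alpha>B = \<Inter>{alpha_of G E h | h. h \<in> B}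
          in generate G \<alpha>B \<inter> B \<noteq> {} \<and>
             (\<forall>\<alpha>'. \<alpha>' \<subseteq> E \<and> generate G \<alpha>' \<inter> B \<noteq> {} \<longrightarrow> \<alpha>B \<subseteq> \<alpha>')"
      unfolding Let_def B_def[symmetric] S_def[symmetric] using PS minim by blast
  qed
qed

end
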